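(* Let $\mathcal{R}$ be the universal $R$-matrix of $U_q(\mathfrak{su}_2)$, $\mu=q^{2H}$, and $Q=(q-q^{-1})^2FE+q^{2H+1}+q^{-2H-1}$. Then $$\mathrm{Tr}_1^{(1/2)}\big(\mathcal{R}_{21}\mathcal{R}_{31}\mathcal{R}_{13}\mathcal{R}_{12}(\mu\otimes1\otimes1)\big)=\Delta(Q),$$ where $\mathrm{Tr}_1^{(1/2)}$ means representing the first tensor factor in the spin-$1/2$ representation and tracing over it.
   Context: $q$ generic complex, $U_q(\mathfrak{su}_2)$ generated by $E,F,q^H$ with $q^HE=qEq^H$, $q^HF=q^{-1}Fq^H$, $[E,F]=[2H]_q$, $[x]_q=(q^x-q^{-x})/(q-q^{-1})$; coproduct $\Delta(E)=E\otimes q^{-H}+q^H\otimes E$, $\Delta(F)=F\otimes q^{-H}+q^H\otimes F$, $\Delta(q^H)=q^H\otimes q^H$. $\mathcal{R}=\sum_{k\ge0}\frac{(q-q^{-1})^k}{[k]_q!}q^{-k(k+1)/2}(F\otimes E)^k(q^{kH}\otimes q^{-kH})q^{2(H\otimes H)}=\mathcal{R}^\alpha\otimes\mathcal{R}_\alpha$; leg notation: $\mathcal{R}_{12}=\mathcal{R}^\alpha\otimes\mathcal{R}_\alpha\otimes1$, $\mathcal{R}_{13}=\mathcal{R}^\alpha\otimes1\otimes\mathcal{R}_\alpha$, $\mathcal{R}_{21}=\mathcal{R}_\alpha\otimes\mathcal{R}^\alpha\otimes1$, $\mathcal{R}_{31}=\mathcal{R}_\alpha\otimes1\otimes\mathcal{R}^\alpha$.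 Spin-$1/2$ representation: basis $|1/2,\pm1/2\rangle$ with $E|1/2,m\rangle=[1/2-m]_q|1/2,m+1\rangle$, $F|1/2,m\rangle=[1/2+m]_q|1/2,m-1\rangle$, $H|1/2,m\rangle=m|1/2,m\rangle$. Equalities are understood as operators on tensor products of finite-dimensional spin representations. *)

theory Defs
  imports Complex_Main
begin

text \<open>We fix h with q = exp h and put q^x := exp (x h) for real x
(this fixes the branch for the fractional powers q^(2 m1 m2) etc.).
A spin representation of spin j is described by its dimension n = 2j+1; its basis
vectors are indexed by i < n, the basis vector with index i having weight
m = i - (n-1)/2.  Operators on tensor products are given by their matrix
entries in the product basis.\<close>

definition qpow :: "complex \<Rightarrow> real \<Rightarrow> complex" where
  "qpow h x = exp (complex_of_real x * h)"

definition qnum :: "complex \<Rightarrow> real \<Rightarrow> complex" where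
  "qnum h x = (qpow h x - qpow h (-x)) / (qpow h 1 - qpow h (-1))"

definition qfact :: "complex \<Rightarrow> nat \<Rightarrow> complex" where
  "qfact h k = (\<Prod>i=1..k. qnum h (real i))"

definition wt :: "nat \<Rightarrow> nat \<Rightarrow> real" where
  "wt n i = real i - (real n - 1) / 2"

text \<open>single-site matrices: E|j,m> = [j-m]|j,m+1>, F|j,m> = [j+m]|j,m-1>
(for n = 2 this is exactly the given spin-1/2 representation)\<close>
definition spinE :: "complex \<Rightarrow> nat \<Rightarrow> nat \<Rightarrow> nat \<Rightarrow> complex" where
  "spinE h n i i' = (if i = Suc i' \<and> i < n then qnum h ((real n - 1) / 2 - wt n i') else 0)"

definition spinF :: "complex \<Rightarrow> nat \<Rightarrow> nat \<Rightarrow> nat \<Rightarrow> complex" where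
  "spinF h n i i' = (if Suc i = i' \<and> i' < n then qnum h ((real n - 1) / 2 + wt n i') else 0)"

definition spinqH :: "complex \<Rightarrow> real \<Rightarrow> nat \<Rightarrow> nat \<Rightarrow> nat \<Rightarrow> complex" where
  "spinqH h c n i i' = (if i = i' then qpow h (c * wt n i) else 0)"

definition mat_mult :: "nat \<Rightarrow> (nat \<Rightarrow> nat \<Rightarrow> complex) \<Rightarrow> (nat \<Rightarrow> nat \<Rightarrow> complex) \<Rightarrow> nat \<Rightarrow> nat \<Rightarrow> complex" where
  "mat_mult n A B i k = (\<Sum>j<n. A i j * B j k)"

primrec mat_pow :: "nat \<Rightarrow> (nat \<Rightarrow> nat \<Rightarrow> complex) \<Rightarrow> nat \<Rightarrow> nat \<Rightarrow> nat \<Rightarrow> complex" where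
  "mat_pow n A 0 = (\<lambda>i j. if i = j then 1 else 0)"
| "mat_pow n A (Suc k) = mat_mult n (mat_pow n A k) A"

text \<open>Universal R-matrix evaluated on V_na (x) V_nb:
 sum_k (q-q^-1)^k/[k]! q^(-k(k+1)/2) (F (x) E)^k (q^(kH) (x) q^(-kH)) q^(2 H(x)H).
 All terms with k >= na vanish (F^na = 0 on V_na), so the sum is truncated at na.\<close>
definition Rmat :: "complex \<Rightarrow> nat \<Rightarrow> nat \<Rightarrow> nat \<times> nat \<Rightarrow> nat \<times> nat \<Rightarrow> complex" where
  "Rmat h na nb x y = (case x of (xa, xb) \<Rightarrow> case y of (ya, yb) \<Rightarrow>
     (\<Sum>k<na. (qpow h 1 - qpow h (-1)) ^ k / qfact h k * qpow h (- (real k * (real k + 1) / 2))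
        * mat_pow na (spinF h na) k xa ya * mat_pow nb (spinE h nb) k xb yb
        * qpow h (real k * wt na ya - real k * wt nb yb)
        * qpow h (2 * wt na ya * wt nb yb)))"

type_synonym op3 = "nat \<times> nat \<times> nat \<Rightarrow> nat \<times> nat \<times> nat \<Rightarrow> complex"
type_synonym op2 = "nat \<times> nat \<Rightarrow> nat \<times> nat \<Rightarrow> complex"

definition delta :: "nat \<Rightarrow> nat \<Rightarrow> complex" where
  "delta a b = (if a = b then 1 else 0)"

definition R12 :: "complex \<Rightarrow> nat \<Rightarrow> nat \<Rightarrow> nat \<Rightarrow> op3" where
  "R12 h n1 n2 n3 x y = (case x of (x1, x2, x3) \<Rightarrow> case y of (y1, y2, y3) \<Rightarrow>
     Rmat h n1 n2 (x1, x2) (y1, y2) * delta x3 y3)"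

definition R13 :: "complex \<Rightarrow> nat \<Rightarrow> nat \<Rightarrow> nat \<Rightarrow> op3" where
  "R13 h n1 n2 n3 x y = (case x of (x1, x2, x3) \<Rightarrow> case y of (y1, y2, y3) \<Rightarrow>
     Rmat h n1 n3 (x1, x3) (y1, y3) * delta x2 y2)"

definition R21 :: "complex \<Rightarrow> nat \<Rightarrow> nat \<Rightarrow> nat \<Rightarrow> op3" where
  "R21 h n1 n2 n3 x y = (case x of (x1, x2, x3) \<Rightarrow> case y of (y1, y2, y3) \<Rightarrow>
     Rmat h n2 n1 (x2, x1) (y2, y1) * delta x3 y3)"

definition R31 :: "complex \<Rightarrow> nat \<Rightarrow> nat \<Rightarrow> nat \<Rightarrow> op3" where
  "R31 h n1 n2 n3 x y = (case x of (x1, x2, x3) \<Rightarrow> case y of (y1, y2, y3) \<Rightarrow>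
     Rmat h n3 n1 (x3, x1) (y3, y1) * delta x2 y2)"

definition mu1 :: "complex \<Rightarrow> nat \<Rightarrow> nat \<Rightarrow> nat \<Rightarrow> op3" where
  "mu1 h n1 n2 n3 x y = (if x = y then qpow h (2 * wt n1 (fst x)) else 0)"

definition mul3 :: "nat \<Rightarrow> nat \<Rightarrow> nat \<Rightarrow> op3 \<Rightarrow> op3 \<Rightarrow> op3" where
  "mul3 n1 n2 n3 A B x z = (\<Sum>y\<in>{..<n1} \<times> {..<n2} \<times> {..<n3}. A x y * B y z)"

definition ptrace1 :: "nat \<Rightarrow> op3 \<Rightarrow> op2" where
  "ptrace1 n1 M x y = (case x of (x2, x3) \<Rightarrow> case y of (y2, y3) \<Rightarrow>
     (\<Sum>i<n1. M (i, x2, x3) (i, y2, y3)))"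

definition mul2 :: "nat \<Rightarrow> nat \<Rightarrow> op2 \<Rightarrow> op2 \<Rightarrow> op2" where
  "mul2 n2 n3 A B x z = (\<Sum>y\<in>{..<n2} \<times> {..<n3}. A x y * B y z)"

definition kron :: "(nat \<Rightarrow> nat \<Rightarrow> complex) \<Rightarrow> (nat \<Rightarrow> nat \<Rightarrow> complex) \<Rightarrow> op2" where
  "kron A B x y = A (fst x) (fst y) * B (snd x) (snd y)"

definition DeltaE :: "complex \<Rightarrow> nat \<Rightarrow> nat \<Rightarrow> op2" where
  "DeltaE h n2 n3 x y = kron (spinE h n2) (spinqH h (-1) n3) x y + kron (spinqH h 1 n2) (spinE h n3) x y"

definition DeltaF :: "complex \<Rightarrow> nat \<Rightarrow> nat \<Rightarrow> op2" where
  "DeltaF h n2 n3 x y = kron (spinF h n2) (spinqH h (-1) n3) x y + kron (spinqH h 1 n2) (spinF h n3) x y"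

definition DeltaqH :: "complex \<Rightarrow> real \<Rightarrow> nat \<Rightarrow> nat \<Rightarrow> op2" where
  "DeltaqH h c n2 n3 = kron (spinqH h c n2) (spinqH h c n3)"

text \<open>Delta(Q) for Q = (q-q^-1)^2 F E + q^(2H+1) + q^(-2H-1), Delta an algebra map:
 Delta(q^(2H+1)) = q * Delta(q^H)^2, Delta(q^(-2H-1)) = q^-1 * Delta(q^(-H))^2.\<close>
definition DeltaQ :: "complex \<Rightarrow> nat \<Rightarrow> nat \<Rightarrow> op2" where
  "DeltaQ h n2 n3 x y =
     (qpow h 1 - qpow h (-1)) ^ 2 * mul2 n2 n3 (DeltaF h n2 n3) (DeltaE h n2 n3) x y
     + qpow h 1 * mul2 n2 n3 (DeltaqH h 1 n2 n3) (DeltaqH h 1 n2 n3) x y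
     + qpow h (-1) * mul2 n2 n3 (DeltaqH h (-1) n2 n3) (DeltaqH h (-1) n2 n3) x y"

end

theory Submission
  imports Defs
begin


definition sub :: "op3 \<Rightarrow> nat \<Rightarrow> nat \<Rightarrow> op2" where
  "sub A i k = (\<lambda>x y. A (i, fst x, snd x) (k, fst y, snd y))"

lemma sum_prod_split:
  fixes f :: "'a \<times> 'b \<Rightarrow> complex"
  assumes "finite A" "finite B"
  shows "(\<Sum>y\<in>A \<times> B. f y) = (\<Sum>k\<in>A. \<Sum>b\<in>B. f (k, b))"
  using assms by (simp add: sum.cartesian_product split_def)

lemma sub_mul3:
  "sub (mul3 2 n2 n3 A B) i j = (\<lambda>x z. mul2 n2 n3 (sub A i 0) (sub B 0 j) x z
       + mul2 n2 n3 (sub A i 1) (sub B 1 j) x z)"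
  apply (rule ext)+
  apply (simp only: sub_def mul3_def mul2_def)
  apply (subst sum_prod_split)
    apply simp apply simp
  apply (simp add: numeral_2_eq_2 lessThan_Suc)
  done

lemma mul3_assoc: "mul3 n1 n2 n3 (mul3 n1 n2 n3 A B) C = mul3 n1 n2 n3 A (mul3 n1 n2 n3 B C)"
  unfolding mul3_def
  apply (rule ext)+
  apply (simp add: sum_distrib_left sum_distrib_right mult.assoc)
  apply (rule sum.swap)
  done

lemma ptrace_sub: "ptrace1 2 M x y = sub M 0 0 x y + sub M 1 1 x y"
  by (cases x; cases y) (simp add: ptrace1_def sub_def numeral_2_eq_2 lessThan_Suc)

lemma qpow_add: "qpow h a * qpow h b = qpow h (a + b)"
  by (simp add: qpow_def exp_add[symmetric] distrib_right)

lemma qpow_0[simp]: "qpow h 0 = 1"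
  by (simp add: qpow_def)

lemma mat_pow_one:
  assumes "\<And>i j. A i j \<noteq> 0 \<Longrightarrow> i < n"
  shows "mat_pow n A 1 = A"
proof (rule ext, rule ext)
  fix i j
  show "mat_pow n A 1 i j = A i j"
  proof (cases "i < n")
    case True
    have "mat_pow n A 1 i j = (\<Sum>ja<n. (if i = ja then 1 else 0) * A ja j)" by (simp add: mat_mult_def)
    also have "\<dots> = (\<Sum>ja<n. if i = ja then A i j else 0)" by (rule sum.cong) auto
    finally show ?thesis using True by simp
  next
    case False
    then show ?thesis using assms[of i j] by (auto simp: mat_mult_def)
  qed
qed

lemma spinE_pow2: "mat_pow 2 (spinE h 2) (Suc (Suc k)) = (\<lambda>i j. 0)"
proof (induction k)
  case 0
  have 1: "mat_pow 2 (spinE h 2) 1 = spinE h 2"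
    by (rule mat_pow_one) (auto simp: spinE_def split: if_splits)
    have a: "mat_pow 2 (spinE h 2) (Suc (Suc 0)) = mat_mult 2 (mat_pow 2 (spinE h 2) (Suc 0)) (spinE h 2)"
      by (rule mat_pow.simps(2))
    have b: "mat_pow 2 (spinE h 2) (Suc 0) = spinE h 2" using 1 by simp
    show ?case unfolding a b
    apply (rule ext)+
    apply (auto simp add: mat_mult_def spinE_def numeral_2_eq_2 lessThan_Suc)
    done
next
  case (Suc k)
  show ?case
    apply (subst mat_pow.simps(2))
    apply (subst Suc.IH)
    apply (rule ext)+
    apply (simp add: mat_mult_def)
    done
qed

lemma spinE_supp: "spinE h n i j \<noteq> 0 \<Longrightarrow> i < n"
  by (auto simp: spinE_def split: if_splits)
lemma spinF_supp: "spinF h n i j \<noteq> 0 \<Longrightarrow> i < n"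
  by (auto simp: spinF_def split: if_splits)

lemma mat_pow_F1: "mat_pow n (spinF h n) 1 = spinF h n"
  by (rule mat_pow_one) (rule spinF_supp)
lemma mat_pow_E1: "mat_pow n (spinE h n) 1 = spinE h n"
  by (rule mat_pow_one) (rule spinE_supp)

lemma qfact_0: "qfact h 0 = 1" by (simp add: qfact_def)
lemma qfact_1: "qfact h 1 = qnum h 1" by (simp add: qfact_def)

lemma Rmat_left2:
  "Rmat h 2 n (x1,x2) (y1,y2) =
     (if x1 = y1 \<and> x2 = y2 then qpow h (2 * wt 2 y1 * wt n y2) else 0)
     + (qpow h 1 - qpow h (-1)) / qnum h 1 * qpow h (-1) * spinF h 2 x1 y1 * spinE h n x2 y2
       * qpow h (wt 2 y1 - wt n y2) * qpow h (2 * wt 2 y1 * wt n y2)"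
proof -
  define t where "t k = (qpow h 1 - qpow h (-1)) ^ k / qfact h k * qpow h (- (real k * (real k + 1) / 2))
        * mat_pow 2 (spinF h 2) k x1 y1 * mat_pow n (spinE h n) k x2 y2
        * qpow h (real k * wt 2 y1 - real k * wt n y2)
        * qpow h (2 * wt 2 y1 * wt n y2)" for k
  have R: "Rmat h 2 n (x1,x2) (y1,y2) = (\<Sum>k<2. t k)" by (simp add: Rmat_def t_def)
  have t0: "t 0 = (if x1 = y1 \<and> x2 = y2 then qpow h (2 * wt 2 y1 * wt n y2) else 0)"
    by (simp add: t_def qfact_0)
  have t1: "t 1 = (qpow h 1 - qpow h (-1)) / qnum h 1 * qpow h (-1) * spinF h 2 x1 y1 * spinE h n x2 y2
       * qpow h (wt 2 y1 - wt n y2) * qpow h (2 * wt 2 y1 * wt n y2)"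
    unfolding t_def qfact_1 mat_pow_E1 mat_pow_F1 by simp
  have "{..<2::nat} = {0,1}" by auto
  then have sum2: "(\<Sum>k<2. t k) = t 0 + t 1" by simp
  show ?thesis by (simp only: R sum2 t0 t1)
qed

lemma Rmat_right2:
  assumes "n \<ge> 1"
  shows "Rmat h n 2 (x1,x2) (y1,y2) =
     (if x1 = y1 \<and> x2 = y2 then qpow h (2 * wt n y1 * wt 2 y2) else 0)
     + (qpow h 1 - qpow h (-1)) / qnum h 1 * qpow h (-1) * spinF h n x1 y1 * spinE h 2 x2 y2
       * qpow h (wt n y1 - wt 2 y2) * qpow h (2 * wt n y1 * wt 2 y2)"
proof -
  define t where "t k = (qpow h 1 - qpow h (-1)) ^ k / qfact h k * qpow h (- (real k * (real k + 1) / 2))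
        * mat_pow n (spinF h n) k x1 y1 * mat_pow 2 (spinE h 2) k x2 y2
        * qpow h (real k * wt n y1 - real k * wt 2 y2)
        * qpow h (2 * wt n y1 * wt 2 y2)" for k
  have R: "Rmat h n 2 (x1,x2) (y1,y2) = (\<Sum>k<n. t k)" by (simp add: Rmat_def t_def)
  have tz: "t k = 0" if "k \<ge> 2" for k
  proof -
    define m where "m = k - 2"
    have m: "k = Suc (Suc m)" using that unfolding m_def by arith
    show ?thesis unfolding m t_def spinE_pow2 by (simp only: mult_zero_right mult_zero_left)
  qed
  have s2: "(\<Sum>k<n. t k) = (\<Sum>k<2. t k)"
  proof (cases "n = 1")
    case True
    have F0: "spinF h n x1 y1 = 0" using True by (auto simp add: spinF_def)
    have "t 1 = 0" unfolding t_def mat_pow_F1 F0 by (simp only: mult_zero_right mult_zero_left)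
    then show ?thesis using True by (simp add: numeral_2_eq_2 lessThan_Suc)
  next
    case False
    then have "n \<ge> 2" using assms by simp
    then have "{..<n} = {..<2} \<union> {2..<n}" by auto
    then have "(\<Sum>k<n. t k) = sum t ({..<2} \<union> {2..<n})" by simp
    also have "\<dots> = (\<Sum>k<2. t k) + (\<Sum>k\<in>{2..<n}. t k)"
      by (rule sum.union_disjoint) auto
    finally have "(\<Sum>k<n. t k) = (\<Sum>k<2. t k) + (\<Sum>k\<in>{2..<n}. t k)" .
    then show ?thesis using tz by simp
  qed
  have t0: "t 0 = (if x1 = y1 \<and> x2 = y2 then qpow h (2 * wt n y1 * wt 2 y2) else 0)"
    by (simp add: t_def qfact_0)
  have t1: "t 1 = (qpow h 1 - qpow h (-1)) / qnum h 1 * qpow h (-1) * spinF h n x1 y1 * spinE h 2 x2 y2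
       * qpow h (wt n y1 - wt 2 y2) * qpow h (2 * wt n y1 * wt 2 y2)"
    unfolding t_def qfact_1 mat_pow_E1 mat_pow_F1 by simp
  have "{..<2::nat} = {0,1}" by auto
  then have sum2: "(\<Sum>k<2. t k) = t 0 + t 1" by simp
  show ?thesis by (simp only: R s2 sum2 t0 t1)
qed



lemma wt20: "wt 2 0 = -1/2" by (simp add: wt_def)
lemma wt21: "wt 2 1 = 1/2" by (simp add: wt_def)
lemma wt21': "wt 2 (Suc 0) = 1/2" by (simp add: wt_def)

definition aa :: "complex \<Rightarrow> complex" where
  "aa h = (qpow h 1 - qpow h (-1)) * qpow h (-1/2)"

lemma qpow3: "qpow h a * qpow h b * qpow h c = qpow h (a + b + c)"
  by (simp add: qpow_add)

lemma sub_eqI: "(\<And>a b c d. A (i,a,b) (k,c,d) = f (a,b) (c,d)) \<Longrightarrow> sub A i k = f"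
  unfolding sub_def by (rule ext)+ (metis prod.collapse)

context
  fixes h :: complex and n2 n3 :: nat
  assumes dne: "qpow h 1 \<noteq> qpow h (-1)" and n2: "n2 \<ge> 1" and n3: "n3 \<ge> 1"
begin

lemma qnum1: "qnum h 1 = 1"
  using dne by (simp add: qnum_def)

lemma F201: "spinF h 2 0 1 = 1" using qnum1 by (simp add: spinF_def wt_def)
lemma F201': "spinF h 2 0 (Suc 0) = 1" using F201 by simp
lemma E210: "spinE h 2 1 0 = 1" using qnum1 by (simp add: spinE_def wt_def)

lemma E210': "spinE h 2 (Suc 0) 0 = 1" using E210 by simp

lemma R12_00: "sub (R12 h 2 n2 n3) 0 0 = kron (spinqH h (-1) n2) delta"
  by (rule sub_eqI) (simp add: R12_def Rmat_left2 kron_def spinqH_def spinF_def wt20 delta_def)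
lemma R12_11: "sub (R12 h 2 n2 n3) 1 1 = kron (spinqH h 1 n2) delta"
  by (rule sub_eqI) (simp add: R12_def Rmat_left2 kron_def spinqH_def spinF_def wt21 wt21' delta_def)
lemma R12_10: "sub (R12 h 2 n2 n3) 1 0 = (\<lambda>x y. 0)"
  by (rule sub_eqI) (simp add: R12_def Rmat_left2 kron_def spinqH_def spinF_def wt21 wt21' delta_def)
lemma R12_01: "sub (R12 h 2 n2 n3) 0 1 = (\<lambda>x y. aa h * kron (spinE h n2) delta x y)"
proof (rule sub_eqI)
  fix x2 x3 y2 y3
  have e: "qpow h (-1) * qpow h (wt 2 1 - wt n2 y2) * qpow h (2 * wt 2 1 * wt n2 y2) = qpow h (-1/2)"
    by (simp add: qpow3 wt21 wt21')
  have "R12 h 2 n2 n3 (0,x2,x3) (1,y2,y3) = (qpow h 1 - qpow h (-1)) * spinE h n2 x2 y2 * delta x3 y3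
     * (qpow h (-1) * qpow h (wt 2 1 - wt n2 y2) * qpow h (2 * wt 2 1 * wt n2 y2))"
    by (simp add: R12_def Rmat_left2 F201 F201' qnum1 ac_simps)
  then show "R12 h 2 n2 n3 (0,x2,x3) (1,y2,y3) = aa h * kron (spinE h n2) delta (x2,x3) (y2,y3)"
    unfolding e by (simp add: aa_def kron_def ac_simps)
qed

lemma R13_00: "sub (R13 h 2 n2 n3) 0 0 = kron delta (spinqH h (-1) n3)"
  by (rule sub_eqI) (simp add: R13_def Rmat_left2 kron_def spinqH_def spinF_def wt20 delta_def)
lemma R13_11: "sub (R13 h 2 n2 n3) 1 1 = kron delta (spinqH h 1 n3)"
  by (rule sub_eqI) (simp add: R13_def Rmat_left2 kron_def spinqH_def spinF_def wt21 wt21' delta_def)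
lemma R13_10: "sub (R13 h 2 n2 n3) 1 0 = (\<lambda>x y. 0)"
  by (rule sub_eqI) (simp add: R13_def Rmat_left2 kron_def spinqH_def spinF_def wt21 wt21' delta_def)
lemma R13_01: "sub (R13 h 2 n2 n3) 0 1 = (\<lambda>x y. aa h * kron delta (spinE h n3) x y)"
proof (rule sub_eqI)
  fix x2 x3 y2 y3
  have e: "qpow h (-1) * qpow h (wt 2 1 - wt n3 y3) * qpow h (2 * wt 2 1 * wt n3 y3) = qpow h (-1/2)"
    by (simp add: qpow3 wt21 wt21')
  have "R13 h 2 n2 n3 (0,x2,x3) (1,y2,y3) = (qpow h 1 - qpow h (-1)) * spinE h n3 x3 y3 * delta x2 y2
     * (qpow h (-1) * qpow h (wt 2 1 - wt n3 y3) * qpow h (2 * wt 2 1 * wt n3 y3))"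
    by (simp add: R13_def Rmat_left2 F201 F201' qnum1 ac_simps)
  then show "R13 h 2 n2 n3 (0,x2,x3) (1,y2,y3) = aa h * kron delta (spinE h n3) (x2,x3) (y2,y3)"
    unfolding e by (simp add: aa_def kron_def ac_simps)
qed

lemma R21_00: "sub (R21 h 2 n2 n3) 0 0 = kron (spinqH h (-1) n2) delta"
  by (rule sub_eqI) (simp add: R21_def Rmat_right2[OF n2] kron_def spinqH_def spinE_def wt20 delta_def)
lemma R21_11: "sub (R21 h 2 n2 n3) 1 1 = kron (spinqH h 1 n2) delta"
  by (rule sub_eqI) (simp add: R21_def Rmat_right2[OF n2] kron_def spinqH_def spinE_def wt21 wt21' delta_def)
lemma R21_01: "sub (R21 h 2 n2 n3) 0 1 = (\<lambda>x y. 0)"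
  by (rule sub_eqI) (simp add: R21_def Rmat_right2[OF n2] kron_def spinqH_def spinE_def wt21 wt21' delta_def)
lemma R21_10: "sub (R21 h 2 n2 n3) 1 0 = (\<lambda>x y. aa h * kron (spinF h n2) delta x y)"
proof (rule sub_eqI)
  fix x2 x3 y2 y3
  have e: "qpow h (-1) * qpow h (wt n2 y2 - wt 2 0) * qpow h (2 * wt n2 y2 * wt 2 0) = qpow h (-1/2)"
    by (simp add: qpow3 wt20)
  have "R21 h 2 n2 n3 (1,x2,x3) (0,y2,y3) = (qpow h 1 - qpow h (-1)) * spinF h n2 x2 y2 * delta x3 y3
     * (qpow h (-1) * qpow h (wt n2 y2 - wt 2 0) * qpow h (2 * wt n2 y2 * wt 2 0))"
    by (simp add: R21_def Rmat_right2[OF n2] E210 E210' qnum1 ac_simps)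
  then show "R21 h 2 n2 n3 (1,x2,x3) (0,y2,y3) = aa h * kron (spinF h n2) delta (x2,x3) (y2,y3)"
    unfolding e by (simp add: aa_def kron_def ac_simps)
qed

lemma R31_00: "sub (R31 h 2 n2 n3) 0 0 = kron delta (spinqH h (-1) n3)"
  by (rule sub_eqI) (simp add: R31_def Rmat_right2[OF n3] kron_def spinqH_def spinE_def wt20 delta_def)
lemma R31_11: "sub (R31 h 2 n2 n3) 1 1 = kron delta (spinqH h 1 n3)"
  by (rule sub_eqI) (simp add: R31_def Rmat_right2[OF n3] kron_def spinqH_def spinE_def wt21 wt21' delta_def)
lemma R31_01: "sub (R31 h 2 n2 n3) 0 1 = (\<lambda>x y. 0)"
  by (rule sub_eqI) (simp add: R31_def Rmat_right2[OF n3] kron_def spinqH_def spinE_def wt21 wt21' delta_def)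
lemma R31_10: "sub (R31 h 2 n2 n3) 1 0 = (\<lambda>x y. aa h * kron delta (spinF h n3) x y)"
proof (rule sub_eqI)
  fix x2 x3 y2 y3
  have e: "qpow h (-1) * qpow h (wt n3 y3 - wt 2 0) * qpow h (2 * wt n3 y3 * wt 2 0) = qpow h (-1/2)"
    by (simp add: qpow3 wt20)
  have "R31 h 2 n2 n3 (1,x2,x3) (0,y2,y3) = (qpow h 1 - qpow h (-1)) * spinF h n3 x3 y3 * delta x2 y2
     * (qpow h (-1) * qpow h (wt n3 y3 - wt 2 0) * qpow h (2 * wt n3 y3 * wt 2 0))"
    by (simp add: R31_def Rmat_right2[OF n3] E210 E210' qnum1 ac_simps)
  then show "R31 h 2 n2 n3 (1,x2,x3) (0,y2,y3) = aa h * kron delta (spinF h n3) (x2,x3) (y2,y3)"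
    unfolding e by (simp add: aa_def kron_def ac_simps)
qed

lemma mu_00: "sub (mu1 h 2 n2 n3) 0 0 = (\<lambda>x y. if x = y then qpow h (-1) else 0)"
  by (rule sub_eqI) (auto simp add: mu1_def wt20)
lemma mu_11: "sub (mu1 h 2 n2 n3) 1 1 = (\<lambda>x y. if x = y then qpow h 1 else 0)"
  by (rule sub_eqI) (auto simp add: mu1_def wt21 wt21')
lemma mu_01: "sub (mu1 h 2 n2 n3) 0 1 = (\<lambda>x y. 0)"
  by (rule sub_eqI) (auto simp add: mu1_def)
lemma mu_10: "sub (mu1 h 2 n2 n3) 1 0 = (\<lambda>x y. 0)"
  by (rule sub_eqI) (auto simp add: mu1_def)

abbreviation SS where "SS \<equiv> {..<n2} \<times> {..<n3}"

lemma mul2_zero_l: "mul2 n2 n3 (\<lambda>x y. 0) B = (\<lambda>x y. 0)"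
  by (rule ext)+ (simp add: mul2_def)
lemma mul2_zero_r: "mul2 n2 n3 A (\<lambda>x y. 0) = (\<lambda>x y. 0)"
  by (rule ext)+ (simp add: mul2_def)
lemma mul2_smul_l: "mul2 n2 n3 (\<lambda>x y. c * A x y) B = (\<lambda>x y. c * mul2 n2 n3 A B x y)"
  by (rule ext)+ (simp add: mul2_def sum_distrib_left mult.assoc)
lemma mul2_smul_r: "mul2 n2 n3 A (\<lambda>x y. c * B x y) = (\<lambda>x y. c * mul2 n2 n3 A B x y)"
  by (rule ext)+ (simp add: mul2_def sum_distrib_left ac_simps)
lemma mul2_kron: "mul2 n2 n3 (kron A B) (kron C D) = kron (mat_mult n2 A C) (mat_mult n3 B D)"
  apply (rule ext)+
  apply (simp add: mul2_def kron_def mat_mult_def sum_product sum.cartesian_product split_def)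
  apply (rule sum.cong) apply simp apply (simp add: ac_simps)
  done

lemma mm_delta_r: "k < n \<Longrightarrow> mat_mult n A delta i k = A i k"
proof -
  assume k: "k < n"
  have "mat_mult n A delta i k = (\<Sum>j<n. if j = k then A i k else 0)"
    unfolding mat_mult_def by (rule sum.cong) (auto simp: delta_def)
  then show ?thesis using k by simp
qed
lemma mm_delta_l: "i < n \<Longrightarrow> mat_mult n delta A i k = A i k"
proof -
  assume k: "i < n"
  have "mat_mult n delta A i k = (\<Sum>j<n. if i = j then A i k else 0)"
    unfolding mat_mult_def by (rule sum.cong) (auto simp: delta_def)
  then show ?thesis using k by simp
qed

lemma mul2_cong:
  assumes "\<And>x y. x \<in> SS \<Longrightarrow> y \<in> SS \<Longrightarrow> A x y = A' x y"
    and "\<And>x y. x \<in> SS \<Longrightarrow> y \<in> SS \<Longrightarrow> B x y = B' x y"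
    and "x \<in> SS" "z \<in> SS"
  shows "mul2 n2 n3 A B x z = mul2 n2 n3 A' B' x z"
  unfolding mul2_def by (rule sum.cong) (use assms in auto)

lemma mul2_diag: "z \<in> SS \<Longrightarrow> mul2 n2 n3 A (\<lambda>x y. if x = y then c else 0) x z = c * A x z"
proof -
  assume z: "z \<in> SS"
  have "mul2 n2 n3 A (\<lambda>x y. if x = y then c else 0) x z = (\<Sum>y\<in>SS. if y = z then c * A x z else 0)"
    unfolding mul2_def by (rule sum.cong) auto
  then show ?thesis using z by simp
qed

lemmas blocks = R12_00 R12_01 R12_10 R12_11 R13_00 R13_01 R13_10 R13_11
  R21_00 R21_01 R21_10 R21_11 R31_00 R31_01 R31_10 R31_11
lemmas blocks' = blocks[unfolded One_nat_def]

lemma kron_apply: "kron A B (a,b) (c,d) = A a c * B b d" by (simp add: kron_def)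

definition "M1 = mul3 2 n2 n3 (R21 h 2 n2 n3) (R31 h 2 n2 n3)"
definition "N1 = mul3 2 n2 n3 (R13 h 2 n2 n3) (R12 h 2 n2 n3)"

lemma M1_01: "sub M1 0 1 = (\<lambda>x y. 0)"
  by (simp add: M1_def sub_mul3 blocks blocks' mul2_zero_l mul2_zero_r)
lemma N1_10: "sub N1 1 0 = (\<lambda>x y. 0)"
  by (simp add: N1_def sub_mul3 blocks blocks' mul2_zero_l mul2_zero_r)

lemma M1_00: "x \<in> SS \<Longrightarrow> y \<in> SS \<Longrightarrow> sub M1 0 0 x y = DeltaqH h (-1) n2 n3 x y"
  by (auto simp add: M1_def sub_mul3 blocks blocks' mul2_zero_l mul2_zero_r mul2_smul_l mul2_smul_r mul2_kron
     DeltaqH_def kron_apply mm_delta_l mm_delta_r)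
lemma M1_11: "x \<in> SS \<Longrightarrow> y \<in> SS \<Longrightarrow> sub M1 1 1 x y = DeltaqH h 1 n2 n3 x y"
  by (auto simp add: M1_def sub_mul3 blocks blocks' mul2_zero_l mul2_zero_r mul2_smul_l mul2_smul_r mul2_kron
     DeltaqH_def kron_apply mm_delta_l mm_delta_r)
lemma M1_10: "x \<in> SS \<Longrightarrow> y \<in> SS \<Longrightarrow> sub M1 1 0 x y = aa h * DeltaF h n2 n3 x y"
  by (auto simp add: M1_def sub_mul3 blocks blocks' mul2_zero_l mul2_zero_r mul2_smul_l mul2_smul_r mul2_kron
     DeltaF_def kron_apply mm_delta_l mm_delta_r algebra_simps)
lemma N1_00: "x \<in> SS \<Longrightarrow> y \<in> SS \<Longrightarrow> sub N1 0 0 x y = DeltaqH h (-1) n2 n3 x y"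
  by (auto simp add: N1_def sub_mul3 blocks blocks' mul2_zero_l mul2_zero_r mul2_smul_l mul2_smul_r mul2_kron
     DeltaqH_def kron_apply mm_delta_l mm_delta_r)
lemma N1_11: "x \<in> SS \<Longrightarrow> y \<in> SS \<Longrightarrow> sub N1 1 1 x y = DeltaqH h 1 n2 n3 x y"
  by (auto simp add: N1_def sub_mul3 blocks blocks' mul2_zero_l mul2_zero_r mul2_smul_l mul2_smul_r mul2_kron
     DeltaqH_def kron_apply mm_delta_l mm_delta_r)
lemma N1_01: "x \<in> SS \<Longrightarrow> y \<in> SS \<Longrightarrow> sub N1 0 1 x y = aa h * DeltaE h n2 n3 x y"
  by (auto simp add: N1_def sub_mul3 blocks blocks' mul2_zero_l mul2_zero_r mul2_smul_l mul2_smul_r mul2_kron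
     DeltaE_def kron_apply mm_delta_l mm_delta_r algebra_simps)

lemma aa_sq: "qpow h 1 * (aa h * aa h) = (qpow h 1 - qpow h (-1)) ^ 2"
proof -
  have "qpow h 1 * (qpow h (-1/2) * qpow h (-1/2)) = 1"
    by (simp add: qpow_add)
  moreover have "qpow h 1 * (aa h * aa h) = (qpow h 1 - qpow h (-1)) ^ 2 * (qpow h 1 * (qpow h (-1/2) * qpow h (-1/2)))"
    unfolding aa_def power2_eq_square by (simp only: ac_simps)
  ultimately show ?thesis by simp
qed

lemma P_main:
  assumes x: "x \<in> SS" and y: "y \<in> SS"
  shows "ptrace1 2 (mul3 2 n2 n3 (mul3 2 n2 n3 M1 N1) (mu1 h 2 n2 n3)) x y = DeltaQ h n2 n3 x y"
proof -
  define P where "P = mul3 2 n2 n3 M1 N1"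
  have tr: "ptrace1 2 (mul3 2 n2 n3 P (mu1 h 2 n2 n3)) x y = qpow h (-1) * sub P 0 0 x y + qpow h 1 * sub P 1 1 x y"
    unfolding ptrace_sub sub_mul3 mu_00 mu_01 mu_10 mu_11 mul2_zero_r
    using mul2_diag[OF y] by simp
  have p0: "sub P 0 0 x y = mul2 n2 n3 (DeltaqH h (-1) n2 n3) (DeltaqH h (-1) n2 n3) x y"
    unfolding P_def sub_mul3 M1_01 N1_10 mul2_zero_r mul2_zero_l
    using mul2_cong[OF M1_00 N1_00 x y] by simp
  have p1: "sub P 1 1 x y = mul2 n2 n3 (\<lambda>x y. aa h * DeltaF h n2 n3 x y) (\<lambda>x y. aa h * DeltaE h n2 n3 x y) x y
     + mul2 n2 n3 (DeltaqH h 1 n2 n3) (DeltaqH h 1 n2 n3) x y"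
    unfolding P_def sub_mul3
    using mul2_cong[OF M1_10 N1_01 x y] mul2_cong[OF M1_11 N1_11 x y] by simp
  have p1': "sub P 1 1 x y = aa h * aa h * mul2 n2 n3 (DeltaF h n2 n3) (DeltaE h n2 n3) x y
     + mul2 n2 n3 (DeltaqH h 1 n2 n3) (DeltaqH h 1 n2 n3) x y"
    unfolding p1 mul2_smul_l mul2_smul_r by simp
  show ?thesis unfolding P_def[symmetric] tr p0 p1' DeltaQ_def
    using aa_sq by (simp add: algebra_simps)
qed

end



theorem corollary5p5:
  fixes h :: complex and n2 n3 :: nat
  assumes generic: "\<forall>k::nat. k > 0 \<longrightarrow> exp h ^ k \<noteq> 1"
    and "n2 \<ge> 1" and "n3 \<ge> 1"
  shows "\<forall>x\<in>{..<n2} \<times> {..<n3}. \<forall>y\<in>{..<n2} \<times> {..<n3}.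
    ptrace1 2
      (mul3 2 n2 n3
        (mul3 2 n2 n3
          (mul3 2 n2 n3
            (mul3 2 n2 n3 (R21 h 2 n2 n3) (R31 h 2 n2 n3))
            (R13 h 2 n2 n3))
          (R12 h 2 n2 n3))
        (mu1 h 2 n2 n3)) x y
    = DeltaQ h n2 n3 x y"
proof (intro ballI)
  fix x y assume x: "x \<in> {..<n2} \<times> {..<n3}" and y: "y \<in> {..<n2} \<times> {..<n3}"
  have dne: "qpow h 1 \<noteq> qpow h (-1)"
  proof
    assume eq: "qpow h 1 = qpow h (-1)"
    have "exp h * exp h = exp (-h) * exp h" using eq by (simp add: qpow_def)
    also have "\<dots> = 1" by (simp add: exp_minus field_simps)
    finally have "exp h ^ 2 = 1" by (simp add: power2_eq_square)
    then show False using generic by (metis zero_less_numeral)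
  qed
  have a: "mul3 2 n2 n3 (mul3 2 n2 n3 (mul3 2 n2 n3 (R21 h 2 n2 n3) (R31 h 2 n2 n3)) (R13 h 2 n2 n3)) (R12 h 2 n2 n3)
     = mul3 2 n2 n3 (M1 h n2 n3) (N1 h n2 n3)"
    unfolding M1_def[OF dne assms(2) assms(3)] N1_def[OF dne assms(2) assms(3)] by (rule mul3_assoc)
  show "ptrace1 2
      (mul3 2 n2 n3
        (mul3 2 n2 n3
          (mul3 2 n2 n3
            (mul3 2 n2 n3 (R21 h 2 n2 n3) (R31 h 2 n2 n3))
            (R13 h 2 n2 n3))
          (R12 h 2 n2 n3))
        (mu1 h 2 n2 n3)) x y
    = DeltaQ h n2 n3 x y"
    unfolding a using P_main[OF dne assms(2) assms(3) x y] .
qed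

end
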